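(* Let $\mathbf{C}$ be a small 2-category and let $\mathbf{D}$ be a 2-category equipped with an enhanced factorization system $(\mathcal{E},\mathcal{M})$. Let $F,G\colon \mathbf{C}\to\mathbf{D}$ be 2-functors and $\alpha\colon F\Rightarrow G$ a 2-natural transformation (a 1-cell of $\mathbf{D}^{\mathbf{C}}$). Then there exist a 2-functor $I\colon\mathbf{C}\to\mathbf{D}$ and 2-natural transformations $\varepsilon\colon F\Rightarrow I$, $\mu\colon I\Rightarrow G$ with $\alpha=\mu\circ\varepsilon$, such that for every object $c\in\mathbf{C}$ the component $\varepsilon_c$ lies in $\mathcal{E}$ and the component $\mu_c$ lies in $\mathcal{M}$.
   Context: For a 2-category $\mathbf{A}$, an enhanced factorization system on $\mathbf{A}$ is a pair $(\mathcal{E},\mathcal{M})$ of classes of 1-cells of $\mathbf{A}$, each containing all isomorphisms, such that: (i) every 1-cell $\alpha$ factors (not necessarily uniquely) as $\alpha=\mu\circ\varepsilon$ with $\varepsilon\in\mathcal{E}$, $\mu\in\mathcal{M}$; (ii) given $\varepsilon\colon F\to F'$ in $\mathcal{E}$, $\mu\colon G\to G'$ in $\mathcal{M}$, 1-cells $\alpha\colon F\to G$, $\alpha'\colon F'\to G'$ and an invertible 2-cell $\Psi\colon \alpha'\varepsilon\Rightarrow\mu\alpha$, there is a unique pair $(\delta,\widetilde\Psi)$ with $\delta\colon F'\to G$ a 1-cell and $\widetilde\Psi\colon\alpha'\Rightarrow\mu\delta$ an invertible 2-cell such that $\delta\varepsilon=\alpha$ and the whiskering $\widetilde\Psi\varepsilon=\Psi$;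 moreover if $\Psi$ is an identity then $\mu\delta=\alpha'$ and $\widetilde\Psi$ is an identity; (iii) given $\varepsilon\colon F\to F'$ in $\mathcal{E}$, $\mu\colon G\to G'$ in $\mathcal{M}$, parallel 1-cells $\alpha_1,\alpha_2\colon F\to G$ and $\alpha_1',\alpha_2'\colon F'\to G'$ with $\alpha_i'\varepsilon=\mu\alpha_i$ ($i=1,2$), and 2-cells $\Phi\colon\alpha_1\Rightarrow\alpha_2$, $\Phi'\colon\alpha_1'\Rightarrow\alpha_2'$ with $\mu\Phi=\Phi'\varepsilon$, let $\delta_i\colon F'\to G$ be the unique 1-cells with $\delta_i\varepsilon=\alpha_i$ and $\mu\delta_i=\alpha_i'$ (from (ii) with identity 2-cell); then there is a unique 2-cell $\Delta\colon\delta_1\Rightarrow\delta_2$ with $\Delta\varepsilon=\Phi$ and $\mu\Delta=\Phi'$. $\mathbf{D}^{\mathbf{C}}$ denotes the 2-category of 2-functors $\mathbf{C}\to\mathbf{D}$, 2-natural transformations, and modifications. *)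

theory Defs
  imports Main
begin

text \<open>Strict 2-categories, presented with explicit sets of objects, 1-cells and 2-cells.
  obj: objects; arr: 1-cells; cell: 2-cells.
  dm/cd: domain/codomain of a 1-cell; cmp g f: composite g after f; idn x: identity 1-cell.
  s2/t2: source/target 1-cell of a 2-cell; vc b a: vertical composite (b after a);
  id2 f: identity 2-cell; hc b a: horizontal composite (b after a).\<close>

record ('o, 'a, 'b) cat2 =
  obj :: "'o set"
  arr :: "'a set"
  cell :: "'b set"
  dm :: "'a \<Rightarrow> 'o"
  cd :: "'a \<Rightarrow> 'o"
  cmp :: "'a \<Rightarrow> 'a \<Rightarrow> 'a"
  idn :: "'o \<Rightarrow> 'a"
  s2 :: "'b \<Rightarrow> 'a"
  t2 :: "'b \<Rightarrow> 'a"
  vc :: "'b \<Rightarrow> 'b \<Rightarrow> 'b"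
  id2 :: "'a \<Rightarrow> 'b"
  hc :: "'b \<Rightarrow> 'b \<Rightarrow> 'b"

definition two_category :: "('o, 'a, 'b) cat2 \<Rightarrow> bool" where
  "two_category C \<longleftrightarrow>
    \<comment> \<open>underlying 1-category\<close>
    (\<forall>f\<in>arr C. dm C f \<in> obj C \<and> cd C f \<in> obj C) \<and>
    (\<forall>x\<in>obj C. idn C x \<in> arr C \<and> dm C (idn C x) = x \<and> cd C (idn C x) = x) \<and>
    (\<forall>f\<in>arr C. \<forall>g\<in>arr C. cd C f = dm C g \<longrightarrow>
        cmp C g f \<in> arr C \<and> dm C (cmp C g f) = dm C f \<and> cd C (cmp C g f) = cd C g) \<and>
    (\<forall>f\<in>arr C. cmp C f (idn C (dm C f)) = f \<and> cmp C (idn C (cd C f)) f = f) \<and>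
    (\<forall>f\<in>arr C. \<forall>g\<in>arr C. \<forall>h\<in>arr C. cd C f = dm C g \<longrightarrow> cd C g = dm C h \<longrightarrow>
        cmp C h (cmp C g f) = cmp C (cmp C h g) f) \<and>
    \<comment> \<open>2-cells and vertical composition\<close>
    (\<forall>\<theta>\<in>cell C. s2 C \<theta> \<in> arr C \<and> t2 C \<theta> \<in> arr C \<and>
        dm C (s2 C \<theta>) = dm C (t2 C \<theta>) \<and> cd C (s2 C \<theta>) = cd C (t2 C \<theta>)) \<and>
    (\<forall>f\<in>arr C. id2 C f \<in> cell C \<and> s2 C (id2 C f) = f \<and> t2 C (id2 C f) = f) \<and>
    (\<forall>\<theta>\<in>cell C. \<forall>\<phi>\<in>cell C. t2 C \<theta> = s2 C \<phi> \<longrightarrow>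
        vc C \<phi> \<theta> \<in> cell C \<and> s2 C (vc C \<phi> \<theta>) = s2 C \<theta> \<and> t2 C (vc C \<phi> \<theta>) = t2 C \<phi>) \<and>
    (\<forall>\<theta>\<in>cell C. vc C \<theta> (id2 C (s2 C \<theta>)) = \<theta> \<and> vc C (id2 C (t2 C \<theta>)) \<theta> = \<theta>) \<and>
    (\<forall>\<theta>\<in>cell C. \<forall>\<phi>\<in>cell C. \<forall>\<psi>\<in>cell C. t2 C \<theta> = s2 C \<phi> \<longrightarrow> t2 C \<phi> = s2 C \<psi> \<longrightarrow>
        vc C \<psi> (vc C \<phi> \<theta>) = vc C (vc C \<psi> \<phi>) \<theta>) \<and>
    \<comment> \<open>horizontal composition\<close>
    (\<forall>\<theta>\<in>cell C. \<forall>\<phi>\<in>cell C. cd C (s2 C \<theta>) = dm C (s2 C \<phi>) \<longrightarrow>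
        hc C \<phi> \<theta> \<in> cell C \<and> s2 C (hc C \<phi> \<theta>) = cmp C (s2 C \<phi>) (s2 C \<theta>) \<and>
        t2 C (hc C \<phi> \<theta>) = cmp C (t2 C \<phi>) (t2 C \<theta>)) \<and>
    (\<forall>f\<in>arr C. \<forall>g\<in>arr C. cd C f = dm C g \<longrightarrow>
        hc C (id2 C g) (id2 C f) = id2 C (cmp C g f)) \<and>
    (\<forall>\<theta>\<in>cell C. hc C \<theta> (id2 C (idn C (dm C (s2 C \<theta>)))) = \<theta> \<and>
        hc C (id2 C (idn C (cd C (s2 C \<theta>)))) \<theta> = \<theta>) \<and>
    (\<forall>\<theta>\<in>cell C. \<forall>\<phi>\<in>cell C. \<forall>\<psi>\<in>cell C.
        cd C (s2 C \<theta>) = dm C (s2 C \<phi>) \<longrightarrow> cd C (s2 C \<phi>) = dm C (s2 C \<psi>) \<longrightarrow>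
        hc C \<psi> (hc C \<phi> \<theta>) = hc C (hc C \<psi> \<phi>) \<theta>) \<and>
    \<comment> \<open>interchange law\<close>
    (\<forall>\<theta>1\<in>cell C. \<forall>\<theta>2\<in>cell C. \<forall>\<phi>1\<in>cell C. \<forall>\<phi>2\<in>cell C.
        t2 C \<theta>1 = s2 C \<theta>2 \<longrightarrow> t2 C \<phi>1 = s2 C \<phi>2 \<longrightarrow> cd C (s2 C \<theta>1) = dm C (s2 C \<phi>1) \<longrightarrow>
        vc C (hc C \<phi>2 \<theta>2) (hc C \<phi>1 \<theta>1) = hc C (vc C \<phi>2 \<phi>1) (vc C \<theta>2 \<theta>1))"

definition iso1 :: "('o, 'a, 'b) cat2 \<Rightarrow> 'a \<Rightarrow> bool" where
  "iso1 C f \<longleftrightarrow> f \<in> arr C \<and> (\<exists>g\<in>arr C. dm C g = cd C f \<and> cd C g = dm C f \<and>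
      cmp C g f = idn C (dm C f) \<and> cmp C f g = idn C (cd C f))"

definition inv2 :: "('o, 'a, 'b) cat2 \<Rightarrow> 'b \<Rightarrow> bool" where
  "inv2 C \<theta> \<longleftrightarrow> \<theta> \<in> cell C \<and> (\<exists>\<phi>\<in>cell C. s2 C \<phi> = t2 C \<theta> \<and> t2 C \<phi> = s2 C \<theta> \<and>
      vc C \<phi> \<theta> = id2 C (s2 C \<theta>) \<and> vc C \<theta> \<phi> = id2 C (t2 C \<theta>))"

definition hom1 :: "('o, 'a, 'b) cat2 \<Rightarrow> 'a \<Rightarrow> 'o \<Rightarrow> 'o \<Rightarrow> bool" where
  "hom1 C f x y \<longleftrightarrow> f \<in> arr C \<and> dm C f = x \<and> cd C f = y"

definition hom2 :: "('o, 'a, 'b) cat2 \<Rightarrow> 'b \<Rightarrow> 'a \<Rightarrow> 'a \<Rightarrow> bool" where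
  "hom2 C \<theta> f g \<longleftrightarrow> \<theta> \<in> cell C \<and> s2 C \<theta> = f \<and> t2 C \<theta> = g"

text \<open>Enhanced factorization system (E, M) on a 2-category D, conditions (i)-(iii).
  Whiskerings: \<mu>\<Phi> = hc (id2 \<mu>) \<Phi>,  \<Phi>\<epsilon> = hc \<Phi> (id2 \<epsilon>).\<close>

definition enhanced_factorization_system ::
  "('o, 'a, 'b) cat2 \<Rightarrow> 'a set \<Rightarrow> 'a set \<Rightarrow> bool" where
  "enhanced_factorization_system D E M \<longleftrightarrow>
    E \<subseteq> arr D \<and> M \<subseteq> arr D \<and>
    {f. iso1 D f} \<subseteq> E \<and> {f. iso1 D f} \<subseteq> M \<and>
    \<comment> \<open>(i)\<close>
    (\<forall>a\<in>arr D. \<exists>e\<in>E. \<exists>m\<in>M. cd D e = dm D m \<and> a = cmp D m e) \<and>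
    \<comment> \<open>(ii)\<close>
    (\<forall>e\<in>E. \<forall>m\<in>M. \<forall>a a' \<Psi>. \<forall>F F' G G'.
        hom1 D e F F' \<longrightarrow> hom1 D m G G' \<longrightarrow> hom1 D a F G \<longrightarrow> hom1 D a' F' G' \<longrightarrow>
        hom2 D \<Psi> (cmp D a' e) (cmp D m a) \<longrightarrow> inv2 D \<Psi> \<longrightarrow>
        (\<exists>!p. hom1 D (fst p) F' G \<and> hom2 D (snd p) a' (cmp D m (fst p)) \<and> inv2 D (snd p) \<and>
              cmp D (fst p) e = a \<and> hc D (snd p) (id2 D e) = \<Psi>) \<and>
        (\<Psi> = id2 D (cmp D a' e) \<longrightarrow>
          (\<forall>d \<Psi>'. hom1 D d F' G \<and> hom2 D \<Psi>' a' (cmp D m d) \<and> inv2 D \<Psi>' \<and>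
              cmp D d e = a \<and> hc D \<Psi>' (id2 D e) = \<Psi> \<longrightarrow>
              cmp D m d = a' \<and> \<Psi>' = id2 D a'))) \<and>
    \<comment> \<open>(iii)\<close>
    (\<forall>e\<in>E. \<forall>m\<in>M. \<forall>F F' G G' a1 a2 a1' a2' \<Phi> \<Phi>' d1 d2.
        hom1 D e F F' \<longrightarrow> hom1 D m G G' \<longrightarrow>
        hom1 D a1 F G \<longrightarrow> hom1 D a2 F G \<longrightarrow> hom1 D a1' F' G' \<longrightarrow> hom1 D a2' F' G' \<longrightarrow>
        cmp D a1' e = cmp D m a1 \<longrightarrow> cmp D a2' e = cmp D m a2 \<longrightarrow>
        hom2 D \<Phi> a1 a2 \<longrightarrow> hom2 D \<Phi>' a1' a2' \<longrightarrow>
        hc D (id2 D m) \<Phi> = hc D \<Phi>' (id2 D e) \<longrightarrow>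
        hom1 D d1 F' G \<longrightarrow> cmp D d1 e = a1 \<longrightarrow> cmp D m d1 = a1' \<longrightarrow>
        hom1 D d2 F' G \<longrightarrow> cmp D d2 e = a2 \<longrightarrow> cmp D m d2 = a2' \<longrightarrow>
        (\<exists>!\<Delta>. hom2 D \<Delta> d1 d2 \<and> hc D \<Delta> (id2 D e) = \<Phi> \<and> hc D (id2 D m) \<Delta> = \<Phi>'))"

record ('o, 'a, 'b, 'p, 'c, 'd) fun2 =
  fo :: "'o \<Rightarrow> 'p"
  fa :: "'a \<Rightarrow> 'c"
  fc :: "'b \<Rightarrow> 'd"

definition two_functor ::
  "('o, 'a, 'b) cat2 \<Rightarrow> ('p, 'c, 'd) cat2 \<Rightarrow> ('o, 'a, 'b, 'p, 'c, 'd) fun2 \<Rightarrow> bool" where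
  "two_functor C D F \<longleftrightarrow>
    (\<forall>x\<in>obj C. fo F x \<in> obj D) \<and>
    (\<forall>f\<in>arr C. fa F f \<in> arr D \<and> dm D (fa F f) = fo F (dm C f) \<and> cd D (fa F f) = fo F (cd C f)) \<and>
    (\<forall>\<theta>\<in>cell C. fc F \<theta> \<in> cell D \<and> s2 D (fc F \<theta>) = fa F (s2 C \<theta>) \<and> t2 D (fc F \<theta>) = fa F (t2 C \<theta>)) \<and>
    (\<forall>x\<in>obj C. fa F (idn C x) = idn D (fo F x)) \<and>
    (\<forall>f\<in>arr C. \<forall>g\<in>arr C. cd C f = dm C g \<longrightarrow> fa F (cmp C g f) = cmp D (fa F g) (fa F f)) \<and>
    (\<forall>f\<in>arr C. fc F (id2 C f) = id2 D (fa F f)) \<and>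
    (\<forall>\<theta>\<in>cell C. \<forall>\<phi>\<in>cell C. t2 C \<theta> = s2 C \<phi> \<longrightarrow> fc F (vc C \<phi> \<theta>) = vc D (fc F \<phi>) (fc F \<theta>)) \<and>
    (\<forall>\<theta>\<in>cell C. \<forall>\<phi>\<in>cell C. cd C (s2 C \<theta>) = dm C (s2 C \<phi>) \<longrightarrow>
        fc F (hc C \<phi> \<theta>) = hc D (fc F \<phi>) (fc F \<theta>))"

definition two_natural ::
  "('o, 'a, 'b) cat2 \<Rightarrow> ('p, 'c, 'd) cat2 \<Rightarrow> ('o, 'a, 'b, 'p, 'c, 'd) fun2 \<Rightarrow>
   ('o, 'a, 'b, 'p, 'c, 'd) fun2 \<Rightarrow> ('o \<Rightarrow> 'c) \<Rightarrow> bool" where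
  "two_natural C D F G \<eta> \<longleftrightarrow>
    (\<forall>x\<in>obj C. hom1 D (\<eta> x) (fo F x) (fo G x)) \<and>
    (\<forall>f\<in>arr C. cmp D (fa G f) (\<eta> (dm C f)) = cmp D (\<eta> (cd C f)) (fa F f)) \<and>
    (\<forall>\<theta>\<in>cell C. hc D (fc G \<theta>) (id2 D (\<eta> (dm C (s2 C \<theta>)))) =
                 hc D (id2 D (\<eta> (cd C (s2 C \<theta>)))) (fc F \<theta>))"

end

theory Submission
  imports Defs
begin


locale tc =
  fixes C :: "('o, 'a, 'b) cat2"
  assumes tc: "two_category C"
begin

lemmas tcu = tc[unfolded two_category_def]
lemmas ax1 = tcu[THEN conjunct1]
lemmas ax2 = tcu[THEN conjunct2, THEN conjunct1]
lemmas ax3 = tcu[THEN conjunct2, THEN conjunct2, THEN conjunct1]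
lemmas ax4 = tcu[THEN conjunct2, THEN conjunct2, THEN conjunct2, THEN conjunct1]
lemmas ax5 = tcu[THEN conjunct2, THEN conjunct2, THEN conjunct2, THEN conjunct2, THEN conjunct1]
lemmas ax6 = tcu[THEN conjunct2, THEN conjunct2, THEN conjunct2, THEN conjunct2, THEN conjunct2, THEN conjunct1]
lemmas ax7 = tcu[THEN conjunct2, THEN conjunct2, THEN conjunct2, THEN conjunct2, THEN conjunct2, THEN conjunct2, THEN conjunct1]
lemmas ax8 = tcu[THEN conjunct2, THEN conjunct2, THEN conjunct2, THEN conjunct2, THEN conjunct2, THEN conjunct2, THEN conjunct2, THEN conjunct1]
lemmas ax9 = tcu[THEN conjunct2, THEN conjunct2, THEN conjunct2, THEN conjunct2, THEN conjunct2, THEN conjunct2, THEN conjunct2, THEN conjunct2, THEN conjunct1]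
lemmas ax10 = tcu[THEN conjunct2, THEN conjunct2, THEN conjunct2, THEN conjunct2, THEN conjunct2, THEN conjunct2, THEN conjunct2, THEN conjunct2, THEN conjunct2, THEN conjunct1]
lemmas ax11 = tcu[THEN conjunct2, THEN conjunct2, THEN conjunct2, THEN conjunct2, THEN conjunct2, THEN conjunct2, THEN conjunct2, THEN conjunct2, THEN conjunct2, THEN conjunct2, THEN conjunct1]
lemmas ax12 = tcu[THEN conjunct2, THEN conjunct2, THEN conjunct2, THEN conjunct2, THEN conjunct2, THEN conjunct2, THEN conjunct2, THEN conjunct2, THEN conjunct2, THEN conjunct2, THEN conjunct2, THEN conjunct1]
lemmas ax13 = tcu[THEN conjunct2, THEN conjunct2, THEN conjunct2, THEN conjunct2, THEN conjunct2, THEN conjunct2, THEN conjunct2, THEN conjunct2, THEN conjunct2, THEN conjunct2, THEN conjunct2, THEN conjunct2, THEN conjunct1]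
lemmas ax14 = tcu[THEN conjunct2, THEN conjunct2, THEN conjunct2, THEN conjunct2, THEN conjunct2, THEN conjunct2, THEN conjunct2, THEN conjunct2, THEN conjunct2, THEN conjunct2, THEN conjunct2, THEN conjunct2, THEN conjunct2, THEN conjunct1]
lemmas ax15 = tcu[THEN conjunct2, THEN conjunct2, THEN conjunct2, THEN conjunct2, THEN conjunct2, THEN conjunct2, THEN conjunct2, THEN conjunct2, THEN conjunct2, THEN conjunct2, THEN conjunct2, THEN conjunct2, THEN conjunct2, THEN conjunct2]

lemma arr_dm[simp]: "f \<in> arr C \<Longrightarrow> dm C f \<in> obj C"
  and arr_cd[simp]: "f \<in> arr C \<Longrightarrow> cd C f \<in> obj C"
  using ax1 by blast+

lemma idn_arr[simp]: "x \<in> obj C \<Longrightarrow> idn C x \<in> arr C"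
  and idn_dm[simp]: "x \<in> obj C \<Longrightarrow> dm C (idn C x) = x"
  and idn_cd[simp]: "x \<in> obj C \<Longrightarrow> cd C (idn C x) = x"
  using ax2 by blast+

lemma cmp_arr[simp]: "f \<in> arr C \<Longrightarrow> g \<in> arr C \<Longrightarrow> cd C f = dm C g \<Longrightarrow> cmp C g f \<in> arr C"
  and cmp_dm[simp]: "f \<in> arr C \<Longrightarrow> g \<in> arr C \<Longrightarrow> cd C f = dm C g \<Longrightarrow> dm C (cmp C g f) = dm C f"
  and cmp_cd[simp]: "f \<in> arr C \<Longrightarrow> g \<in> arr C \<Longrightarrow> cd C f = dm C g \<Longrightarrow> cd C (cmp C g f) = cd C g"
  using ax3 by blast+

lemma cmp_idr: "f \<in> arr C \<Longrightarrow> cmp C f (idn C (dm C f)) = f"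
  and cmp_idl: "f \<in> arr C \<Longrightarrow> cmp C (idn C (cd C f)) f = f"
  using ax4 by blast+

lemma cmp_assoc: "f \<in> arr C \<Longrightarrow> g \<in> arr C \<Longrightarrow> h \<in> arr C \<Longrightarrow> cd C f = dm C g \<Longrightarrow> cd C g = dm C h \<Longrightarrow>
        cmp C h (cmp C g f) = cmp C (cmp C h g) f"
  using ax5 by blast

lemma cell_s2[simp]: "t \<in> cell C \<Longrightarrow> s2 C t \<in> arr C"
  and cell_t2[simp]: "t \<in> cell C \<Longrightarrow> t2 C t \<in> arr C"
  and cell_dm: "t \<in> cell C \<Longrightarrow> dm C (t2 C t) = dm C (s2 C t)"
  and cell_cd: "t \<in> cell C \<Longrightarrow> cd C (t2 C t) = cd C (s2 C t)"
  using ax6 by auto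

lemma id2_cell[simp]: "f \<in> arr C \<Longrightarrow> id2 C f \<in> cell C"
  and id2_s2[simp]: "f \<in> arr C \<Longrightarrow> s2 C (id2 C f) = f"
  and id2_t2[simp]: "f \<in> arr C \<Longrightarrow> t2 C (id2 C f) = f"
  using ax7 by blast+

lemma vc_cell[simp]: "t \<in> cell C \<Longrightarrow> p \<in> cell C \<Longrightarrow> t2 C t = s2 C p \<Longrightarrow> vc C p t \<in> cell C"
  and vc_s2[simp]: "t \<in> cell C \<Longrightarrow> p \<in> cell C \<Longrightarrow> t2 C t = s2 C p \<Longrightarrow> s2 C (vc C p t) = s2 C t"
  and vc_t2[simp]: "t \<in> cell C \<Longrightarrow> p \<in> cell C \<Longrightarrow> t2 C t = s2 C p \<Longrightarrow> t2 C (vc C p t) = t2 C p"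
  using ax8 by blast+

lemma vc_idr: "t \<in> cell C \<Longrightarrow> vc C t (id2 C (s2 C t)) = t"
  and vc_idl: "t \<in> cell C \<Longrightarrow> vc C (id2 C (t2 C t)) t = t"
  using ax9 by blast+

lemma vc_id2[simp]: "f \<in> arr C \<Longrightarrow> vc C (id2 C f) (id2 C f) = id2 C f"
  using vc_idr[of "id2 C f"] by simp

lemma hc_cell[simp]: "t \<in> cell C \<Longrightarrow> p \<in> cell C \<Longrightarrow> cd C (s2 C t) = dm C (s2 C p) \<Longrightarrow> hc C p t \<in> cell C"
  and hc_s2[simp]: "t \<in> cell C \<Longrightarrow> p \<in> cell C \<Longrightarrow> cd C (s2 C t) = dm C (s2 C p) \<Longrightarrow> s2 C (hc C p t) = cmp C (s2 C p) (s2 C t)"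
  and hc_t2[simp]: "t \<in> cell C \<Longrightarrow> p \<in> cell C \<Longrightarrow> cd C (s2 C t) = dm C (s2 C p) \<Longrightarrow> t2 C (hc C p t) = cmp C (t2 C p) (t2 C t)"
  using ax11 by blast+

lemma hc_id2: "f \<in> arr C \<Longrightarrow> g \<in> arr C \<Longrightarrow> cd C f = dm C g \<Longrightarrow> hc C (id2 C g) (id2 C f) = id2 C (cmp C g f)"
  using ax12 by blast

lemma hc_assoc: "t \<in> cell C \<Longrightarrow> p \<in> cell C \<Longrightarrow> q \<in> cell C \<Longrightarrow>
        cd C (s2 C t) = dm C (s2 C p) \<Longrightarrow> cd C (s2 C p) = dm C (s2 C q) \<Longrightarrow>
        hc C q (hc C p t) = hc C (hc C q p) t"
  using ax14 by blast

lemma interchange: "t1 \<in> cell C \<Longrightarrow> t2' \<in> cell C \<Longrightarrow> p1 \<in> cell C \<Longrightarrow> p2 \<in> cell C \<Longrightarrow>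
        t2 C t1 = s2 C t2' \<Longrightarrow> t2 C p1 = s2 C p2 \<Longrightarrow> cd C (s2 C t1) = dm C (s2 C p1) \<Longrightarrow>
        vc C (hc C p2 t2') (hc C p1 t1) = hc C (vc C p2 p1) (vc C t2' t1)"
  using ax15 by blast

lemma inv2_id2: "f \<in> arr C \<Longrightarrow> inv2 C (id2 C f)"
  unfolding inv2_def by (rule conjI, simp, rule bexI[of _ "id2 C f"]) auto

end

lemma tf:
  assumes "two_functor C D F"
  shows tf_obj: "x \<in> obj C \<Longrightarrow> fo F x \<in> obj D"
  and tf_arr: "f \<in> arr C \<Longrightarrow> fa F f \<in> arr D"
  and tf_dm: "f \<in> arr C \<Longrightarrow> dm D (fa F f) = fo F (dm C f)"
  and tf_cd: "f \<in> arr C \<Longrightarrow> cd D (fa F f) = fo F (cd C f)"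
  and tf_cell: "t \<in> cell C \<Longrightarrow> fc F t \<in> cell D"
  and tf_s2: "t \<in> cell C \<Longrightarrow> s2 D (fc F t) = fa F (s2 C t)"
  and tf_t2: "t \<in> cell C \<Longrightarrow> t2 D (fc F t) = fa F (t2 C t)"
  and tf_idn: "x \<in> obj C \<Longrightarrow> fa F (idn C x) = idn D (fo F x)"
  and tf_cmp: "f \<in> arr C \<Longrightarrow> g \<in> arr C \<Longrightarrow> cd C f = dm C g \<Longrightarrow> fa F (cmp C g f) = cmp D (fa F g) (fa F f)"
  and tf_id2: "f \<in> arr C \<Longrightarrow> fc F (id2 C f) = id2 D (fa F f)"
  and tf_vc: "t \<in> cell C \<Longrightarrow> p \<in> cell C \<Longrightarrow> t2 C t = s2 C p \<Longrightarrow> fc F (vc C p t) = vc D (fc F p) (fc F t)"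
  and tf_hc: "t \<in> cell C \<Longrightarrow> p \<in> cell C \<Longrightarrow> cd C (s2 C t) = dm C (s2 C p) \<Longrightarrow> fc F (hc C p t) = hc D (fc F p) (fc F t)"
  using assms unfolding two_functor_def by blast+

lemma diag1:
  assumes D: "two_category D" and efs: "enhanced_factorization_system D E M"
    and e: "e \<in> E" and m: "m \<in> M"
    and he: "hom1 D e X X'" and hm: "hom1 D m Y Y'" and ha: "hom1 D a X Y" and ha': "hom1 D a' X' Y'"
    and sq: "cmp D a' e = cmp D m a"
  shows "\<exists>!d. hom1 D d X' Y \<and> cmp D d e = a \<and> cmp D m d = a'"
proof -
  interpret D: tc D by (rule tc.intro, rule D)
  have ii: "\<forall>e\<in>E. \<forall>m\<in>M. \<forall>a a' \<Psi>. \<forall>F F' G G'.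
        hom1 D e F F' \<longrightarrow> hom1 D m G G' \<longrightarrow> hom1 D a F G \<longrightarrow> hom1 D a' F' G' \<longrightarrow>
        hom2 D \<Psi> (cmp D a' e) (cmp D m a) \<longrightarrow> inv2 D \<Psi> \<longrightarrow>
        (\<exists>!p. hom1 D (fst p) F' G \<and> hom2 D (snd p) a' (cmp D m (fst p)) \<and> inv2 D (snd p) \<and>
              cmp D (fst p) e = a \<and> hc D (snd p) (id2 D e) = \<Psi>) \<and>
        (\<Psi> = id2 D (cmp D a' e) \<longrightarrow>
          (\<forall>d \<Psi>'. hom1 D d F' G \<and> hom2 D \<Psi>' a' (cmp D m d) \<and> inv2 D \<Psi>' \<and>
              cmp D d e = a \<and> hc D \<Psi>' (id2 D e) = \<Psi> \<longrightarrow>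
              cmp D m d = a' \<and> \<Psi>' = id2 D a'))"
    using efs[unfolded enhanced_factorization_system_def, THEN conjunct2, THEN conjunct2, THEN conjunct2, THEN conjunct2, THEN conjunct2, THEN conjunct1] .
  have arrs: "e \<in> arr D" "a' \<in> arr D" "cd D e = dm D a'"
    using he ha' unfolding hom1_def by auto
  define \<Psi> where "\<Psi> = id2 D (cmp D a' e)"
  have h\<Psi>: "hom2 D \<Psi> (cmp D a' e) (cmp D m a)"
    unfolding \<Psi>_def hom2_def sq[symmetric] using arrs by simp
  have i\<Psi>: "inv2 D \<Psi>" unfolding \<Psi>_def using arrs by (intro D.inv2_id2) simp
  have U: "\<exists>!p. hom1 D (fst p) X' Y \<and> hom2 D (snd p) a' (cmp D m (fst p)) \<and> inv2 D (snd p) \<and>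
              cmp D (fst p) e = a \<and> hc D (snd p) (id2 D e) = \<Psi>"
   and V: "\<forall>d \<Psi>'. hom1 D d X' Y \<and> hom2 D \<Psi>' a' (cmp D m d) \<and> inv2 D \<Psi>' \<and>
              cmp D d e = a \<and> hc D \<Psi>' (id2 D e) = \<Psi> \<longrightarrow>
              cmp D m d = a' \<and> \<Psi>' = id2 D a'"
    using ii e m he hm ha ha' h\<Psi> i\<Psi> unfolding \<Psi>_def by blast+
  have good: "hom1 D d X' Y \<and> hom2 D (id2 D a') a' (cmp D m d) \<and> inv2 D (id2 D a') \<and>
              cmp D d e = a \<and> hc D (id2 D a') (id2 D e) = \<Psi>"
    if "hom1 D d X' Y" "cmp D d e = a" "cmp D m d = a'" for d
    using that arrs unfolding hom2_def \<Psi>_def by (auto simp: D.inv2_id2 D.hc_id2)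
  from U obtain p where p: "hom1 D (fst p) X' Y" "hom2 D (snd p) a' (cmp D m (fst p))" "inv2 D (snd p)"
      "cmp D (fst p) e = a" "hc D (snd p) (id2 D e) = \<Psi>" by blast
  with V have "cmp D m (fst p) = a'" by blast
  with p have ex: "hom1 D (fst p) X' Y \<and> cmp D (fst p) e = a \<and> cmp D m (fst p) = a'" by blast
  show ?thesis
  proof (rule ex1I[of _ "fst p"])
    show "hom1 D (fst p) X' Y \<and> cmp D (fst p) e = a \<and> cmp D m (fst p) = a'" by (rule ex)
  next
    fix d assume d: "hom1 D d X' Y \<and> cmp D d e = a \<and> cmp D m d = a'"
    have "(d, id2 D a') = (fst p, id2 D a')"
      using U good[of d] good[of "fst p"] d ex by (metis fst_conv snd_conv)
    then show "d = fst p" by simp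
  qed
qed


lemma diag2:
  assumes efs: "enhanced_factorization_system D E M"
    and "e \<in> E"
    and "m \<in> M"
    and "hom1 D e F F'"
    and "hom1 D m G G'"
    and "hom1 D a1 F G"
    and "hom1 D a2 F G"
    and "hom1 D a1' F' G'"
    and "hom1 D a2' F' G'"
    and "cmp D a1' e = cmp D m a1"
    and "cmp D a2' e = cmp D m a2"
    and "hom2 D \<Phi> a1 a2"
    and "hom2 D \<Phi>' a1' a2'"
    and "hc D (id2 D m) \<Phi> = hc D \<Phi>' (id2 D e)"
    and "hom1 D d1 F' G"
    and "cmp D d1 e = a1"
    and "cmp D m d1 = a1'"
    and "hom1 D d2 F' G"
    and "cmp D d2 e = a2"
    and "cmp D m d2 = a2'"
  shows "(\<exists>!\<Delta>. hom2 D \<Delta> d1 d2 \<and> hc D \<Delta> (id2 D e) = \<Phi> \<and> hc D (id2 D m) \<Delta> = \<Phi>')"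
proof -
  have iii: "\<forall>e\<in>E. \<forall>m\<in>M. \<forall>F F' G G' a1 a2 a1' a2' \<Phi> \<Phi>' d1 d2.
        hom1 D e F F' \<longrightarrow> hom1 D m G G' \<longrightarrow>
        hom1 D a1 F G \<longrightarrow> hom1 D a2 F G \<longrightarrow> hom1 D a1' F' G' \<longrightarrow> hom1 D a2' F' G' \<longrightarrow>
        cmp D a1' e = cmp D m a1 \<longrightarrow> cmp D a2' e = cmp D m a2 \<longrightarrow>
        hom2 D \<Phi> a1 a2 \<longrightarrow> hom2 D \<Phi>' a1' a2' \<longrightarrow>
        hc D (id2 D m) \<Phi> = hc D \<Phi>' (id2 D e) \<longrightarrow>
        hom1 D d1 F' G \<longrightarrow> cmp D d1 e = a1 \<longrightarrow> cmp D m d1 = a1' \<longrightarrow>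
        hom1 D d2 F' G \<longrightarrow> cmp D d2 e = a2 \<longrightarrow> cmp D m d2 = a2' \<longrightarrow>
        (\<exists>!\<Delta>. hom2 D \<Delta> d1 d2 \<and> hc D \<Delta> (id2 D e) = \<Phi> \<and> hc D (id2 D m) \<Delta> = \<Phi>')"
    using efs[unfolded enhanced_factorization_system_def, THEN conjunct2, THEN conjunct2, THEN conjunct2, THEN conjunct2, THEN conjunct2, THEN conjunct2] .
  show ?thesis by (rule iii[rule_format, OF assms(2-20)])
qed

lemma efs_i:
  assumes efs: "enhanced_factorization_system D E M"
  shows "E \<subseteq> arr D \<and> M \<subseteq> arr D \<and> (\<forall>a\<in>arr D. \<exists>e\<in>E. \<exists>m\<in>M. cd D e = dm D m \<and> a = cmp D m e)"
proof -
  note x = efs[unfolded enhanced_factorization_system_def]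
  show ?thesis using x[THEN conjunct1] x[THEN conjunct2, THEN conjunct1]
    x[THEN conjunct2, THEN conjunct2, THEN conjunct2, THEN conjunct2, THEN conjunct1] by blast
qed



theorem proposition1p9:
  fixes C :: "('o, 'a, 'b) cat2" and D :: "('p, 'c, 'd) cat2"
    and E M :: "'c set"
    and F G :: "('o, 'a, 'b, 'p, 'c, 'd) fun2" and \<alpha> :: "'o \<Rightarrow> 'c"
  assumes "two_category C" and "two_category D"
    and "enhanced_factorization_system D E M"
    and "two_functor C D F" and "two_functor C D G"
    and "two_natural C D F G \<alpha>"
  shows "\<exists>I \<epsilon> \<mu>. two_functor C D I \<and> two_natural C D F I \<epsilon> \<and> two_natural C D I G \<mu> \<and>
           (\<forall>c\<in>obj C. \<alpha> c = cmp D (\<mu> c) (\<epsilon> c) \<and> \<epsilon> c \<in> E \<and> \<mu> c \<in> M)"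
proof -
  interpret C: tc C by (rule tc.intro) (rule assms(1))
  interpret D: tc D by (rule tc.intro) (rule assms(2))
  note efs = assms(3)
  note hF = assms(4) and hG = assms(5)
  note Fs = tf_obj[OF hF] tf_arr[OF hF] tf_dm[OF hF] tf_cd[OF hF] tf_cell[OF hF] tf_s2[OF hF] tf_t2[OF hF]
  note Gs = tf_obj[OF hG] tf_arr[OF hG] tf_dm[OF hG] tf_cd[OF hG] tf_cell[OF hG] tf_s2[OF hG] tf_t2[OF hG]
  have al_hom: "\<And>x. x \<in> obj C \<Longrightarrow> hom1 D (\<alpha> x) (fo F x) (fo G x)"
   and al_nat1: "\<And>f. f \<in> arr C \<Longrightarrow> cmp D (fa G f) (\<alpha> (dm C f)) = cmp D (\<alpha> (cd C f)) (fa F f)"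
   and al_nat2: "\<And>\<theta>. \<theta> \<in> cell C \<Longrightarrow> hc D (fc G \<theta>) (id2 D (\<alpha> (dm C (s2 C \<theta>)))) =
                 hc D (id2 D (\<alpha> (cd C (s2 C \<theta>)))) (fc F \<theta>)"
    using assms(6) unfolding two_natural_def by blast+
  have EM: "E \<subseteq> arr D" "M \<subseteq> arr D"
   and fi: "\<forall>a\<in>arr D. \<exists>e\<in>E. \<exists>m\<in>M. cd D e = dm D m \<and> a = cmp D m e"
    using efs_i[OF efs] by blast+
  have "\<forall>c\<in>obj C. \<exists>e m. e \<in> E \<and> m \<in> M \<and> cd D e = dm D m \<and> \<alpha> c = cmp D m e"
  proof
    fix c assume "c \<in> obj C"
    then have "\<alpha> c \<in> arr D" using al_hom unfolding hom1_def by blast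
    then show "\<exists>e m. e \<in> E \<and> m \<in> M \<and> cd D e = dm D m \<and> \<alpha> c = cmp D m e" using fi by blast
  qed
  then obtain ee mm where fac: "\<And>c. c \<in> obj C \<Longrightarrow> ee c \<in> E \<and> mm c \<in> M \<and> cd D (ee c) = dm D (mm c) \<and> \<alpha> c = cmp D (mm c) (ee c)"
    by metis
  define Io where "Io c = cd D (ee c)" for c
  have ee_arr[simp]: "\<And>c. c \<in> obj C \<Longrightarrow> ee c \<in> arr D" and mm_arr[simp]: "\<And>c. c \<in> obj C \<Longrightarrow> mm c \<in> arr D"
    using fac EM by blast+
  have ee_cd[simp]: "\<And>c. c \<in> obj C \<Longrightarrow> cd D (ee c) = Io c" and mm_dm[simp]: "\<And>c. c \<in> obj C \<Longrightarrow> dm D (mm c) = Io c"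
    using fac unfolding Io_def by auto
  have al_eq: "\<And>c. c \<in> obj C \<Longrightarrow> \<alpha> c = cmp D (mm c) (ee c)" using fac by blast
  have ee_dm[simp]: "\<And>c. c \<in> obj C \<Longrightarrow> dm D (ee c) = fo F c"
  proof -
    fix c assume c: "c \<in> obj C"
    have "dm D (ee c) = dm D (\<alpha> c)" using c al_eq[OF c] by simp
    then show "dm D (ee c) = fo F c" using al_hom[OF c] unfolding hom1_def by simp
  qed
  have mm_cd[simp]: "\<And>c. c \<in> obj C \<Longrightarrow> cd D (mm c) = fo G c"
  proof -
    fix c assume c: "c \<in> obj C"
    have "cd D (mm c) = cd D (\<alpha> c)" using c al_eq[OF c] by simp
    then show "cd D (mm c) = fo G c" using al_hom[OF c] unfolding hom1_def by simp
  qed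
  have Io_obj[simp]: "\<And>c. c \<in> obj C \<Longrightarrow> Io c \<in> obj D"
    using D.arr_cd ee_arr ee_cd by metis
  note simps = Fs Gs
  have a_hom: "\<And>f. f \<in> arr C \<Longrightarrow> hom1 D (cmp D (ee (cd C f)) (fa F f)) (fo F (dm C f)) (Io (cd C f))"
    unfolding hom1_def by (simp add: simps)
  have a'_hom: "\<And>f. f \<in> arr C \<Longrightarrow> hom1 D (cmp D (fa G f) (mm (dm C f))) (Io (dm C f)) (fo G (cd C f))"
    unfolding hom1_def by (simp add: simps)
  have sq: "\<And>f. f \<in> arr C \<Longrightarrow> cmp D (cmp D (fa G f) (mm (dm C f))) (ee (dm C f)) =
      cmp D (mm (cd C f)) (cmp D (ee (cd C f)) (fa F f))"
  proof -
    fix f assume f: "f \<in> arr C"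
    have "cmp D (cmp D (fa G f) (mm (dm C f))) (ee (dm C f)) = cmp D (fa G f) (cmp D (mm (dm C f)) (ee (dm C f)))"
      by (rule D.cmp_assoc[symmetric]) (simp_all add: f simps)
    also have "\<dots> = cmp D (fa G f) (\<alpha> (dm C f))" using f by (simp add: al_eq)
    also have "\<dots> = cmp D (\<alpha> (cd C f)) (fa F f)" using f by (rule al_nat1)
    also have "\<dots> = cmp D (cmp D (mm (cd C f)) (ee (cd C f))) (fa F f)" using f by (simp add: al_eq)
    also have "\<dots> = cmp D (mm (cd C f)) (cmp D (ee (cd C f)) (fa F f))"
      by (rule D.cmp_assoc[symmetric]) (simp_all add: f simps)
    finally show "?thesis f" .
  qed
  define P where "P f d \<longleftrightarrow> hom1 D d (Io (dm C f)) (Io (cd C f)) \<and>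
      cmp D d (ee (dm C f)) = cmp D (ee (cd C f)) (fa F f) \<and>
      cmp D (mm (cd C f)) d = cmp D (fa G f) (mm (dm C f))" for f d
  have P1: "\<And>f. f \<in> arr C \<Longrightarrow> \<exists>!d. P f d"
  proof -
    fix f assume f: "f \<in> arr C"
    have "\<exists>!d. hom1 D d (Io (dm C f)) (Io (cd C f)) \<and> cmp D d (ee (dm C f)) = cmp D (ee (cd C f)) (fa F f) \<and>
        cmp D (mm (cd C f)) d = cmp D (fa G f) (mm (dm C f))"
      apply (rule diag1[OF assms(2) efs _ _ _ _ a_hom[OF f] a'_hom[OF f] sq[OF f]])
      using f fac by (auto simp: hom1_def)
    then show "\<exists>!d. P f d" unfolding P_def .
  qed
  define Ia where "Ia f = (THE d. P f d)" for f
  have PI: "\<And>f. f \<in> arr C \<Longrightarrow> P f (Ia f)" unfolding Ia_def using P1 by (rule theI')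
  have PU: "\<And>f d. f \<in> arr C \<Longrightarrow> P f d \<Longrightarrow> Ia f = d" unfolding Ia_def using P1 by (rule the1_equality)
  have Ia_arr[simp]: "\<And>f. f \<in> arr C \<Longrightarrow> Ia f \<in> arr D"
   and Ia_dm[simp]: "\<And>f. f \<in> arr C \<Longrightarrow> dm D (Ia f) = Io (dm C f)"
   and Ia_cd[simp]: "\<And>f. f \<in> arr C \<Longrightarrow> cd D (Ia f) = Io (cd C f)"
   and Ia_e: "\<And>f. f \<in> arr C \<Longrightarrow> cmp D (Ia f) (ee (dm C f)) = cmp D (ee (cd C f)) (fa F f)"
   and Ia_m: "\<And>f. f \<in> arr C \<Longrightarrow> cmp D (mm (cd C f)) (Ia f) = cmp D (fa G f) (mm (dm C f))"
    using PI unfolding P_def hom1_def by blast+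
  define Q where "Q t d \<longleftrightarrow> hom2 D d (Ia (s2 C t)) (Ia (t2 C t)) \<and>
      hc D d (id2 D (ee (dm C (s2 C t)))) = hc D (id2 D (ee (cd C (s2 C t)))) (fc F t) \<and>
      hc D (id2 D (mm (cd C (s2 C t)))) d = hc D (fc G t) (id2 D (mm (dm C (s2 C t))))" for t d
  have Q1: "\<And>t. t \<in> cell C \<Longrightarrow> \<exists>!d. Q t d"
  proof -
    fix t assume t: "t \<in> cell C"
    define f where "f = s2 C t"
    define g where "g = t2 C t"
    have f: "f \<in> arr C" and g: "g \<in> arr C" using t unfolding f_def g_def by simp_all
    have gdm: "dm C g = dm C f" and gcd: "cd C g = cd C f"
      using t C.cell_dm C.cell_cd unfolding f_def g_def by blast+
    have Ft: "fc F t \<in> cell D" "s2 D (fc F t) = fa F f" "t2 D (fc F t) = fa F g"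
      using t unfolding f_def g_def by (simp_all add: simps)
    have Gt: "fc G t \<in> cell D" "s2 D (fc G t) = fa G f" "t2 D (fc G t) = fa G g"
      using t unfolding f_def g_def by (simp_all add: simps)
    have c: "dm C f \<in> obj C" and c': "cd C f \<in> obj C" using f by simp_all
    have hceq: "hc D (id2 D (mm (cd C f))) (hc D (id2 D (ee (cd C f))) (fc F t)) =
                hc D (hc D (fc G t) (id2 D (mm (dm C f)))) (id2 D (ee (dm C f)))"
    proof -
      have "hc D (id2 D (mm (cd C f))) (hc D (id2 D (ee (cd C f))) (fc F t)) =
            hc D (hc D (id2 D (mm (cd C f))) (id2 D (ee (cd C f)))) (fc F t)"
        by (rule D.hc_assoc) (simp_all add: Ft f simps)
      also have "\<dots> = hc D (id2 D (\<alpha> (cd C f))) (fc F t)"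
        using c' by (simp add: D.hc_id2 al_eq)
      also have "\<dots> = hc D (fc G t) (id2 D (\<alpha> (dm C f)))"
        using al_nat2[OF t] unfolding f_def by simp
      also have "\<dots> = hc D (fc G t) (hc D (id2 D (mm (dm C f))) (id2 D (ee (dm C f))))"
        using c by (simp add: D.hc_id2 al_eq)
      also have "\<dots> = hc D (hc D (fc G t) (id2 D (mm (dm C f)))) (id2 D (ee (dm C f)))"
        by (rule D.hc_assoc) (simp_all add: Gt f simps)
      finally show ?thesis .
    qed
    have "\<exists>!d. hom2 D d (Ia f) (Ia g) \<and> hc D d (id2 D (ee (dm C f))) = hc D (id2 D (ee (cd C f))) (fc F t) \<and>
        hc D (id2 D (mm (cd C f))) d = hc D (fc G t) (id2 D (mm (dm C f)))"
      apply (rule diag2[OF efs _ _ _ _ a_hom[OF f] _ a'_hom[OF f] _ sq[OF f] _ _ _ hceq _ Ia_e[OF f] Ia_m[OF f] _ _ _])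
      using f g gdm gcd fac a_hom[OF g] a'_hom[OF g] sq[OF g] Ia_e[OF g] Ia_m[OF g] Ft Gt
      by (auto simp: hom1_def hom2_def simps)
    then show "\<exists>!d. Q t d" unfolding Q_def f_def g_def .
  qed
  define Ic where "Ic t = (THE d. Q t d)" for t
  have QI: "\<And>t. t \<in> cell C \<Longrightarrow> Q t (Ic t)" unfolding Ic_def using Q1 by (rule theI')
  have QU: "\<And>t d. t \<in> cell C \<Longrightarrow> Q t d \<Longrightarrow> Ic t = d" unfolding Ic_def using Q1 by (rule the1_equality)
  have Ic_cell[simp]: "\<And>t. t \<in> cell C \<Longrightarrow> Ic t \<in> cell D"
   and Ic_s2[simp]: "\<And>t. t \<in> cell C \<Longrightarrow> s2 D (Ic t) = Ia (s2 C t)"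
   and Ic_t2[simp]: "\<And>t. t \<in> cell C \<Longrightarrow> t2 D (Ic t) = Ia (t2 C t)"
   and Ic_e: "\<And>t. t \<in> cell C \<Longrightarrow> hc D (Ic t) (id2 D (ee (dm C (s2 C t)))) = hc D (id2 D (ee (cd C (s2 C t)))) (fc F t)"
   and Ic_m: "\<And>t. t \<in> cell C \<Longrightarrow> hc D (id2 D (mm (cd C (s2 C t)))) (Ic t) = hc D (fc G t) (id2 D (mm (dm C (s2 C t))))"
    using QI unfolding Q_def hom2_def by blast+
  define I where "I = \<lparr>fo = Io, fa = Ia, fc = Ic\<rparr>"
  have ax_id: "\<forall>x\<in>obj C. Ia (idn C x) = idn D (Io x)"
  proof
    fix x assume x: "x \<in> obj C"
    have i: "idn C x \<in> arr C" using x by simp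
    have e1: "cmp D (idn D (Io x)) (ee x) = ee x" using D.cmp_idl[of "ee x"] x by simp
    have e2: "cmp D (ee x) (idn D (fo F x)) = ee x" using D.cmp_idr[of "ee x"] x by simp
    have m1: "cmp D (mm x) (idn D (Io x)) = mm x" using D.cmp_idr[of "mm x"] x by simp
    have m2: "cmp D (idn D (fo G x)) (mm x) = mm x" using D.cmp_idl[of "mm x"] x by simp
    show "Ia (idn C x) = idn D (Io x)"
      by (rule PU[OF i]) (simp add: P_def hom1_def x e1 e2 m1 m2 tf_idn[OF hF x] tf_idn[OF hG x])
  qed
  have ax_cmp: "\<forall>f\<in>arr C. \<forall>g\<in>arr C. cd C f = dm C g \<longrightarrow> Ia (cmp C g f) = cmp D (Ia g) (Ia f)"
  proof (intro ballI impI)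
    fix f g assume f: "f \<in> arr C" and g: "g \<in> arr C" and fg: "cd C f = dm C g"
    have gf: "cmp C g f \<in> arr C" using f g fg by simp
    have e: "cmp D (cmp D (Ia g) (Ia f)) (ee (dm C f)) = cmp D (ee (cd C g)) (fa F (cmp C g f))"
    proof -
      have "cmp D (cmp D (Ia g) (Ia f)) (ee (dm C f)) = cmp D (Ia g) (cmp D (Ia f) (ee (dm C f)))"
        by (rule D.cmp_assoc[symmetric]) (simp_all add: f g fg)
      also have "\<dots> = cmp D (Ia g) (cmp D (ee (dm C g)) (fa F f))" using Ia_e[OF f] fg by simp
      also have "\<dots> = cmp D (cmp D (Ia g) (ee (dm C g))) (fa F f)"
        by (rule D.cmp_assoc) (simp_all add: f g fg simps)
      also have "\<dots> = cmp D (cmp D (ee (cd C g)) (fa F g)) (fa F f)" using Ia_e[OF g] by simp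
      also have "\<dots> = cmp D (ee (cd C g)) (cmp D (fa F g) (fa F f))"
        by (rule D.cmp_assoc[symmetric]) (simp_all add: f g fg simps)
      also have "\<dots> = cmp D (ee (cd C g)) (fa F (cmp C g f))" using tf_cmp[OF hF f g fg] by simp
      finally show ?thesis .
    qed
    have m: "cmp D (mm (cd C g)) (cmp D (Ia g) (Ia f)) = cmp D (fa G (cmp C g f)) (mm (dm C f))"
    proof -
      have "cmp D (mm (cd C g)) (cmp D (Ia g) (Ia f)) = cmp D (cmp D (mm (cd C g)) (Ia g)) (Ia f)"
        by (rule D.cmp_assoc) (simp_all add: f g fg)
      also have "\<dots> = cmp D (cmp D (fa G g) (mm (dm C g))) (Ia f)" using Ia_m[OF g] by simp
      also have "\<dots> = cmp D (fa G g) (cmp D (mm (dm C g)) (Ia f))"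
        by (rule D.cmp_assoc[symmetric]) (simp_all add: f g fg simps)
      also have "\<dots> = cmp D (fa G g) (cmp D (fa G f) (mm (dm C f)))" using Ia_m[OF f] fg by simp
      also have "\<dots> = cmp D (cmp D (fa G g) (fa G f)) (mm (dm C f))"
        by (rule D.cmp_assoc) (simp_all add: f g fg simps)
      also have "\<dots> = cmp D (fa G (cmp C g f)) (mm (dm C f))" using tf_cmp[OF hG f g fg] by simp
      finally show ?thesis .
    qed
    show "Ia (cmp C g f) = cmp D (Ia g) (Ia f)"
      by (rule PU[OF gf]) (simp add: P_def hom1_def f g fg e m)
  qed
  have ax_id2: "\<forall>f\<in>arr C. Ic (id2 C f) = id2 D (Ia f)"
  proof
    fix f assume f: "f \<in> arr C"
    have i: "id2 C f \<in> cell C" using f by simp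
    show "Ic (id2 C f) = id2 D (Ia f)"
      by (rule QU[OF i]) (simp add: Q_def hom2_def f D.hc_id2 Ia_e Ia_m tf_id2[OF hF f] tf_id2[OF hG f] simps)
  qed
  have ax_vc: "\<forall>t\<in>cell C. \<forall>p\<in>cell C. t2 C t = s2 C p \<longrightarrow> Ic (vc C p t) = vc D (Ic p) (Ic t)"
  proof (intro ballI impI)
    fix t p assume t: "t \<in> cell C" and p: "p \<in> cell C" and tp: "t2 C t = s2 C p"
    have pt: "vc C p t \<in> cell C" using t p tp by simp
    have dmp: "dm C (s2 C p) = dm C (s2 C t)" and cdp: "cd C (s2 C p) = cd C (s2 C t)"
      using C.cell_dm[OF t] C.cell_cd[OF t] tp by simp_all
    have c: "dm C (s2 C t) \<in> obj C" and c': "cd C (s2 C t) \<in> obj C" using t by simp_all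
    define c0 where "c0 = dm C (s2 C t)"
    define c1 where "c1 = cd C (s2 C t)"
    have Ft: "fc F t \<in> cell D" "s2 D (fc F t) = fa F (s2 C t)" "t2 D (fc F t) = fa F (t2 C t)"
     and Fp: "fc F p \<in> cell D" "s2 D (fc F p) = fa F (s2 C p)" "t2 D (fc F p) = fa F (t2 C p)"
     and Gt: "fc G t \<in> cell D" "s2 D (fc G t) = fa G (s2 C t)" "t2 D (fc G t) = fa G (t2 C t)"
     and Gp: "fc G p \<in> cell D" "s2 D (fc G p) = fa G (s2 C p)" "t2 D (fc G p) = fa G (t2 C p)"
      using t p by (simp_all add: simps)
    have e: "hc D (vc D (Ic p) (Ic t)) (id2 D (ee c0)) = hc D (id2 D (ee c1)) (fc F (vc C p t))"
    proof -
      have "hc D (vc D (Ic p) (Ic t)) (id2 D (ee c0)) = hc D (vc D (Ic p) (Ic t)) (vc D (id2 D (ee c0)) (id2 D (ee c0)))"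
        using c unfolding c0_def by simp
      also have "\<dots> = vc D (hc D (Ic p) (id2 D (ee c0))) (hc D (Ic t) (id2 D (ee c0)))"
        by (rule D.interchange[symmetric]) (simp_all add: t p tp c0_def c)
      also have "\<dots> = vc D (hc D (id2 D (ee c1)) (fc F p)) (hc D (id2 D (ee c1)) (fc F t))"
        using Ic_e[OF t] Ic_e[OF p] dmp cdp unfolding c0_def c1_def by simp
      also have "\<dots> = hc D (vc D (id2 D (ee c1)) (id2 D (ee c1))) (vc D (fc F p) (fc F t))"
        by (rule D.interchange) (simp_all add: Ft Fp tp c1_def c' t simps)
      also have "\<dots> = hc D (id2 D (ee c1)) (fc F (vc C p t))"
        using c' tf_vc[OF hF t p tp] unfolding c1_def by simp
      finally show ?thesis .
    qed
    have m: "hc D (id2 D (mm c1)) (vc D (Ic p) (Ic t)) = hc D (fc G (vc C p t)) (id2 D (mm c0))"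
    proof -
      have "hc D (id2 D (mm c1)) (vc D (Ic p) (Ic t)) = hc D (vc D (id2 D (mm c1)) (id2 D (mm c1))) (vc D (Ic p) (Ic t))"
        using c' unfolding c1_def by simp
      also have "\<dots> = vc D (hc D (id2 D (mm c1)) (Ic p)) (hc D (id2 D (mm c1)) (Ic t))"
        by (rule D.interchange[symmetric]) (simp_all add: t p tp c1_def c')
      also have "\<dots> = vc D (hc D (fc G p) (id2 D (mm c0))) (hc D (fc G t) (id2 D (mm c0)))"
        using Ic_m[OF t] Ic_m[OF p] dmp cdp unfolding c0_def c1_def by simp
      also have "\<dots> = hc D (vc D (fc G p) (fc G t)) (vc D (id2 D (mm c0)) (id2 D (mm c0)))"
        by (rule D.interchange) (simp_all add: Gt Gp tp c0_def c t simps)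
      also have "\<dots> = hc D (fc G (vc C p t)) (id2 D (mm c0))"
        using c tf_vc[OF hG t p tp] unfolding c0_def by simp
      finally show ?thesis .
    qed
    show "Ic (vc C p t) = vc D (Ic p) (Ic t)"
      by (rule QU[OF pt]) (simp add: Q_def hom2_def t p tp e[unfolded c0_def c1_def] m[unfolded c0_def c1_def])
  qed
  have ax_hc: "\<forall>t\<in>cell C. \<forall>p\<in>cell C. cd C (s2 C t) = dm C (s2 C p) \<longrightarrow> Ic (hc C p t) = hc D (Ic p) (Ic t)"
  proof (intro ballI impI)
    fix t p assume t: "t \<in> cell C" and p: "p \<in> cell C" and tp: "cd C (s2 C t) = dm C (s2 C p)"
    have pt: "hc C p t \<in> cell C" using t p tp by simp
    have tp2: "cd C (t2 C t) = dm C (t2 C p)" using C.cell_dm[OF p] C.cell_cd[OF t] tp by simp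
    have c: "dm C (s2 C t) \<in> obj C" and c': "dm C (s2 C p) \<in> obj C" and c'': "cd C (s2 C p) \<in> obj C"
      using t p by simp_all
    define c0 where "c0 = dm C (s2 C t)"
    define c1 where "c1 = dm C (s2 C p)"
    define c2 where "c2 = cd C (s2 C p)"
    have Ft: "fc F t \<in> cell D" "s2 D (fc F t) = fa F (s2 C t)"
     and Fp: "fc F p \<in> cell D" "s2 D (fc F p) = fa F (s2 C p)"
     and Gt: "fc G t \<in> cell D" "s2 D (fc G t) = fa G (s2 C t)"
     and Gp: "fc G p \<in> cell D" "s2 D (fc G p) = fa G (s2 C p)"
      using t p by (simp_all add: simps)
    have e: "hc D (hc D (Ic p) (Ic t)) (id2 D (ee c0)) = hc D (id2 D (ee c2)) (fc F (hc C p t))"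
    proof -
      have "hc D (hc D (Ic p) (Ic t)) (id2 D (ee c0)) = hc D (Ic p) (hc D (Ic t) (id2 D (ee c0)))"
        by (rule D.hc_assoc[symmetric]) (simp_all add: t p tp c0_def c)
      also have "\<dots> = hc D (Ic p) (hc D (id2 D (ee c1)) (fc F t))"
        using Ic_e[OF t] tp unfolding c0_def c1_def by simp
      also have "\<dots> = hc D (hc D (Ic p) (id2 D (ee c1))) (fc F t)"
        by (rule D.hc_assoc) (simp_all add: Ft t p tp c1_def c' simps)
      also have "\<dots> = hc D (hc D (id2 D (ee c2)) (fc F p)) (fc F t)"
        using Ic_e[OF p] unfolding c1_def c2_def by simp
      also have "\<dots> = hc D (id2 D (ee c2)) (hc D (fc F p) (fc F t))"
        by (rule D.hc_assoc[symmetric]) (simp_all add: Ft Fp t p tp c2_def c'' simps)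
      also have "\<dots> = hc D (id2 D (ee c2)) (fc F (hc C p t))"
        using tf_hc[OF hF t p tp] by simp
      finally show ?thesis .
    qed
    have m: "hc D (id2 D (mm c2)) (hc D (Ic p) (Ic t)) = hc D (fc G (hc C p t)) (id2 D (mm c0))"
    proof -
      have "hc D (id2 D (mm c2)) (hc D (Ic p) (Ic t)) = hc D (hc D (id2 D (mm c2)) (Ic p)) (Ic t)"
        by (rule D.hc_assoc) (simp_all add: t p tp c2_def c'')
      also have "\<dots> = hc D (hc D (fc G p) (id2 D (mm c1))) (Ic t)"
        using Ic_m[OF p] unfolding c1_def c2_def by simp
      also have "\<dots> = hc D (fc G p) (hc D (id2 D (mm c1)) (Ic t))"
        by (rule D.hc_assoc[symmetric]) (simp_all add: Gp t p tp c1_def c' simps)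
      also have "\<dots> = hc D (fc G p) (hc D (fc G t) (id2 D (mm c0)))"
        using Ic_m[OF t] tp unfolding c0_def c1_def by simp
      also have "\<dots> = hc D (hc D (fc G p) (fc G t)) (id2 D (mm c0))"
        by (rule D.hc_assoc) (simp_all add: Gt Gp t p tp c0_def c simps)
      also have "\<dots> = hc D (fc G (hc C p t)) (id2 D (mm c0))"
        using tf_hc[OF hG t p tp] by simp
      finally show ?thesis .
    qed
    have s2I: "s2 D (hc D (Ic p) (Ic t)) = Ia (s2 C (hc C p t))"
      using ax_cmp t p tp by simp
    have t2I: "t2 D (hc D (Ic p) (Ic t)) = Ia (t2 C (hc C p t))"
      using ax_cmp t p tp tp2 by simp
    have cellI: "hc D (Ic p) (Ic t) \<in> cell D" using t p tp by simp
    show "Ic (hc C p t) = hc D (Ic p) (Ic t)"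
      by (rule QU[OF pt]) (simp add: Q_def hom2_def s2I t2I cellI t p tp e[unfolded c0_def c2_def] m[unfolded c0_def c2_def])
  qed
  have "two_functor C D I"
    unfolding two_functor_def I_def using ax_id ax_cmp ax_id2 ax_vc ax_hc by simp
  moreover have "two_natural C D F I ee"
    unfolding two_natural_def I_def using Ia_e Ic_e by (simp add: hom1_def)
  moreover have "two_natural C D I G mm"
    unfolding two_natural_def I_def using Ia_m Ic_m by (simp add: hom1_def)
  moreover have "\<forall>c\<in>obj C. \<alpha> c = cmp D (mm c) (ee c) \<and> ee c \<in> E \<and> mm c \<in> M"
    using fac by blast
  ultimately show ?thesis by blast
qed

end
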